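(* Let $G$ be a finite simple graph and let $P$ be a solvable pebble distribution on $G$. Then $$\sum_{v\in V(G)}\mathrm{ef}(v)P(v)\geq |V(G)|+\mathrm{TE}(P).$$
   Context: A pebble distribution on $G$ is a function $P:V(G)\to\mathbb{Z}_{\geq 0}$. A pebbling move from a vertex $u$ with at least two pebbles to an adjacent vertex $v$ removes two pebbles from $u$ and adds one to $v$. A vertex $v$ is $k$-reachable under $P$ if some executable sequence of pebbling moves (never making a pebble count negative) yields a distribution with at least $k$ pebbles on $v$; reachable means $1$-reachable. $P$ is solvable if every vertex is reachable. $\mathrm{reach}(P,v)$ is the largest $k$ such that $v$ is $k$-reachable under $P$. The excess $\mathrm{exc}(P,v)$ is $\mathrm{reach}(P,v)-1$ if $v$ is reachable and $0$ otherwise; the total excess is $\mathrm{TE}(P)=\sum_{v\in V(G)}\mathrm{exc}(P,v)$. For a vertex $v$, $N_i(v)$ is the set of vertices at distance exactly $i$ from $v$, and the effect of $v$ is $\mathrm{ef}(v)=\sum_{i\geq 0}(1/2)^i|N_i(v)|$. *)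

theory Defs
  imports Complex_Main
begin

definition simple_graph :: "'a set \<Rightarrow> ('a \<Rightarrow> 'a \<Rightarrow> bool) \<Rightarrow> bool" where
  "simple_graph V E \<longleftrightarrow> finite V \<and> (\<forall>u w. E u w \<longrightarrow> u \<in> V \<and> w \<in> V)
     \<and> (\<forall>u w. E u w \<longrightarrow> E w u) \<and> (\<forall>u. \<not> E u u)"

inductive walk :: "'a set \<Rightarrow> ('a \<Rightarrow> 'a \<Rightarrow> bool) \<Rightarrow> nat \<Rightarrow> 'a \<Rightarrow> 'a \<Rightarrow> bool"
  for V E where
  walk0: "u \<in> V \<Longrightarrow> walk V E 0 u u"
| walkS: "walk V E n u w \<Longrightarrow> E w x \<Longrightarrow> walk V E (Suc n) u x"

definition dist_sphere :: "'a set \<Rightarrow> ('a \<Rightarrow> 'a \<Rightarrow> bool) \<Rightarrow> nat \<Rightarrow> 'a \<Rightarrow> 'a set" where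
  "dist_sphere V E i v = {u \<in> V. walk V E i v u \<and> (\<forall>m<i. \<not> walk V E m v u)}"

definition effect :: "'a set \<Rightarrow> ('a \<Rightarrow> 'a \<Rightarrow> bool) \<Rightarrow> 'a \<Rightarrow> real" where
  "effect V E v = (\<Sum>i. (1/2::real) ^ i * real (card (dist_sphere V E i v)))"

definition pebble_move :: "'a set \<Rightarrow> ('a \<Rightarrow> 'a \<Rightarrow> bool) \<Rightarrow> ('a \<Rightarrow> nat) \<Rightarrow> ('a \<Rightarrow> nat) \<Rightarrow> bool" where
  "pebble_move V E P Q \<longleftrightarrow> (\<exists>u w. u \<in> V \<and> w \<in> V \<and> E u w \<and> 2 \<le> P u \<and>
      Q = P(u := P u - 2, w := P w + 1))"

definition pebble_steps :: "'a set \<Rightarrow> ('a \<Rightarrow> 'a \<Rightarrow> bool) \<Rightarrow> ('a \<Rightarrow> nat) \<Rightarrow> ('a \<Rightarrow> nat) \<Rightarrow> bool" where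
  "pebble_steps V E = (pebble_move V E)\<^sup>*\<^sup>*"

definition k_reachable :: "'a set \<Rightarrow> ('a \<Rightarrow> 'a \<Rightarrow> bool) \<Rightarrow> ('a \<Rightarrow> nat) \<Rightarrow> 'a \<Rightarrow> nat \<Rightarrow> bool" where
  "k_reachable V E P v k \<longleftrightarrow> (\<exists>Q. pebble_steps V E P Q \<and> k \<le> Q v)"

definition reachable :: "'a set \<Rightarrow> ('a \<Rightarrow> 'a \<Rightarrow> bool) \<Rightarrow> ('a \<Rightarrow> nat) \<Rightarrow> 'a \<Rightarrow> bool" where
  "reachable V E P v \<longleftrightarrow> k_reachable V E P v 1"

definition solvable :: "'a set \<Rightarrow> ('a \<Rightarrow> 'a \<Rightarrow> bool) \<Rightarrow> ('a \<Rightarrow> nat) \<Rightarrow> bool" where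
  "solvable V E P \<longleftrightarrow> (\<forall>v \<in> V. reachable V E P v)"

definition reach :: "'a set \<Rightarrow> ('a \<Rightarrow> 'a \<Rightarrow> bool) \<Rightarrow> ('a \<Rightarrow> nat) \<Rightarrow> 'a \<Rightarrow> nat" where
  "reach V E P v = (GREATEST k. k_reachable V E P v k)"

definition excess :: "'a set \<Rightarrow> ('a \<Rightarrow> 'a \<Rightarrow> bool) \<Rightarrow> ('a \<Rightarrow> nat) \<Rightarrow> 'a \<Rightarrow> nat" where
  "excess V E P v = (if reachable V E P v then reach V E P v - 1 else 0)"

definition total_excess :: "'a set \<Rightarrow> ('a \<Rightarrow> 'a \<Rightarrow> bool) \<Rightarrow> ('a \<Rightarrow> nat) \<Rightarrow> nat" where
  "total_excess V E P = (\<Sum>v\<in>V. excess V E P v)"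

end

theory Submission
  imports Defs
begin

definition conn :: "'a set \<Rightarrow> ('a \<Rightarrow> 'a \<Rightarrow> bool) \<Rightarrow> 'a \<Rightarrow> 'a \<Rightarrow> bool" where
  "conn V E v u \<longleftrightarrow> (\<exists>n. walk V E n v u)"

definition gdist :: "'a set \<Rightarrow> ('a \<Rightarrow> 'a \<Rightarrow> bool) \<Rightarrow> 'a \<Rightarrow> 'a \<Rightarrow> nat" where
  "gdist V E v u = (LEAST n. walk V E n v u)"

definition wt :: "'a set \<Rightarrow> ('a \<Rightarrow> 'a \<Rightarrow> bool) \<Rightarrow> 'a \<Rightarrow> 'a \<Rightarrow> real" where
  "wt V E v u = (if conn V E v u then (1/2) ^ gdist V E v u else 0)"

lemma wt_nonneg: "0 \<le> wt V E v u"
  by (simp add: wt_def)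

lemma walk_prepend:
  assumes "walk V E n b u" "E a b" "a \<in> V" shows "walk V E (Suc n) a u"
  using assms
proof (induction rule: walk.induct)
  case (walk0 u)
  show ?case by (rule walk.walkS[where V=V and E=E, OF walk.walk0[where V=V and E=E, OF walk0.prems(2)] walk0.prems(1)])
next
  case (walkS n u w x)
  show ?case by (rule walk.walkS[where V=V and E=E, OF walkS.IH[OF walkS.prems] walkS.hyps(2)])
qed

lemma wt_move:
  assumes "E a b" "a \<in> V" shows "wt V E b u \<le> 2 * wt V E a u"
proof (cases "conn V E b u")
  case True
  define n where "n = gdist V E b u"
  have w: "walk V E n b u" using True unfolding n_def gdist_def conn_def by (metis LeastI_ex)
  have w2: "walk V E (Suc n) a u" using walk_prepend[OF w assms(1,2)] .
  hence c: "conn V E a u" by (auto simp: conn_def)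
  have le: "gdist V E a u \<le> Suc n" unfolding gdist_def using w2 by (rule Least_le)
  have "(1/2::real) ^ Suc n \<le> (1/2) ^ gdist V E a u"
    using le by (intro power_decreasing) auto
  then show ?thesis using True c by (simp add: wt_def n_def)
next
  case False
  then show ?thesis by (simp add: wt_def)
qed

definition W :: "'a set \<Rightarrow> ('a \<Rightarrow> 'a \<Rightarrow> bool) \<Rightarrow> ('a \<Rightarrow> nat) \<Rightarrow> 'a \<Rightarrow> real" where
  "W V E Q u = (\<Sum>v\<in>V. wt V E v u * real (Q v))"

lemma W_move:
  assumes g: "simple_graph V E" and m: "pebble_move V E P Q"
  shows "W V E Q u \<le> W V E P u"
proof -
  obtain a b where ab: "a \<in> V" "b \<in> V" "E a b" "2 \<le> P a"
    and Q: "Q = P(a := P a - 2, b := P b + 1)"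
    using m unfolding pebble_move_def by blast
  have irr: "\<forall>x. \<not> E x x" using g unfolding simple_graph_def by blast
  have neq: "a \<noteq> b" using ab(3) irr by blast
  have fin: "finite V" using g unfolding simple_graph_def by blast
  have rq: "\<And>v. real (Q v) = real (P v) - (if v = a then 2 else 0) + (if v = b then 1 else 0)"
    using neq ab(4) by (auto simp: Q of_nat_diff)
  have "W V E Q u = (\<Sum>v\<in>V. wt V E v u * real (P v) - (if v = a then 2 * wt V E v u else 0)
        + (if v = b then wt V E v u else 0))"
    unfolding W_def by (rule sum.cong) (auto simp: rq algebra_simps)
  also have "\<dots> = W V E P u - 2 * wt V E a u + wt V E b u"
    using fin ab(1,2) by (simp add: sum.distrib sum_subtractf W_def)
  also have "\<dots> \<le> W V E P u" using wt_move[of E a b V u, OF ab(3,1)] by simp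
  finally show ?thesis .
qed

lemma W_steps:
  assumes g: "simple_graph V E" and s: "pebble_steps V E P Q"
  shows "W V E Q u \<le> W V E P u"
  using s unfolding pebble_steps_def
proof induction
  case base then show ?case by simp
next
  case (step y z)
  then show ?case using W_move[OF g, of y z u] by simp
qed

lemma Q_le_W:
  assumes g: "simple_graph V E" and u: "u \<in> V"
  shows "real (Q u) \<le> W V E Q u"
proof -
  have fin: "finite V" using g unfolding simple_graph_def by blast
  have c: "conn V E u u" using walk0[OF u] by (auto simp: conn_def)
  have "gdist V E u u = 0" unfolding gdist_def using walk0[OF u] by simp
  hence "wt V E u u = 1" using c by (simp add: wt_def)
  hence "real (Q u) = wt V E u u * real (Q u)" by simp
  also have "\<dots> \<le> W V E Q u" unfolding W_def
    using fin u by (intro member_le_sum) (auto simp: wt_nonneg)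
  finally show ?thesis .
qed

lemma reach_le:
  assumes g: "simple_graph V E" and u: "u \<in> V" and r: "reachable V E P u"
  shows "1 \<le> reach V E P u \<and> real (reach V E P u) \<le> W V E P u"
proof -
  have bnd: "\<And>k. k_reachable V E P u k \<Longrightarrow> real k \<le> W V E P u"
  proof -
    fix k assume "k_reachable V E P u k"
    then obtain Q where "pebble_steps V E P Q" "k \<le> Q u" by (auto simp: k_reachable_def)
    thus "real k \<le> W V E P u" using W_steps[OF g, of P Q u] Q_le_W[OF g u, of Q] by linarith
  qed
  have r1: "k_reachable V E P u 1" using r by (simp add: reachable_def)
  have b2: "\<forall>y. k_reachable V E P u y \<longrightarrow> y \<le> nat \<lceil>W V E P u\<rceil>"
  proof (intro allI impI)
    fix y assume "k_reachable V E P u y"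
    hence "real y \<le> W V E P u" by (rule bnd)
    hence "real_of_int (int y) \<le> W V E P u" by simp
    hence "real_of_int (int y) \<le> real_of_int \<lceil>W V E P u\<rceil>"
      using le_of_int_ceiling by (rule order_trans)
    hence "int y \<le> \<lceil>W V E P u\<rceil>" by (simp only: of_int_le_iff)
    thus "y \<le> nat \<lceil>W V E P u\<rceil>" by simp
  qed
  have "k_reachable V E P u (reach V E P u)" unfolding reach_def
    by (rule GreatestI_nat[where P="k_reachable V E P u", OF r1]) (use b2 in blast)
  moreover have "1 \<le> reach V E P u" unfolding reach_def
    by (rule Greatest_le_nat[where P="k_reachable V E P u", OF r1]) (use b2 in blast)
  ultimately show ?thesis using bnd by blast
qed

lemma effect_eq:
  assumes g: "simple_graph V E"
  shows "effect V E v = (\<Sum>u\<in>V. wt V E v u)"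
proof -
  have fin: "finite V" using g unfolding simple_graph_def by blast
  define A where "A = {u \<in> V. conn V E v u}"
  have finA: "finite A" using fin by (simp add: A_def)
  have sph: "\<And>i. dist_sphere V E i v = {u \<in> A. gdist V E v u = i}"
  proof
    fix i show "dist_sphere V E i v \<subseteq> {u \<in> A. gdist V E v u = i}"
    proof
      fix u assume "u \<in> dist_sphere V E i v"
      hence h: "u \<in> V" "walk V E i v u" "\<forall>m<i. \<not> walk V E m v u" by (auto simp: dist_sphere_def)
      have "gdist V E v u = i" unfolding gdist_def
        by (rule Least_equality) (use h in \<open>auto simp: not_less[symmetric]\<close>)
      thus "u \<in> {u \<in> A. gdist V E v u = i}" using h by (auto simp: A_def conn_def)
    qed
  next
    fix i show "{u \<in> A. gdist V E v u = i} \<subseteq> dist_sphere V E i v"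
    proof
      fix u assume "u \<in> {u \<in> A. gdist V E v u = i}"
      hence h: "u \<in> V" "\<exists>n. walk V E n v u" "(LEAST n. walk V E n v u) = i"
        by (auto simp: A_def conn_def gdist_def)
      have "walk V E i v u" using h(2,3) by (metis LeastI_ex)
      moreover have "\<forall>m<i. \<not> walk V E m v u" using h(3) not_less_Least by blast
      ultimately show "u \<in> dist_sphere V E i v" using h(1) by (simp add: dist_sphere_def)
    qed
  qed
  define N where "N = gdist V E v ` A"
  have finN: "finite N" using finA by (simp add: N_def)
  have z: "(1/2::real) ^ i * real (card (dist_sphere V E i v)) = 0" if "i \<notin> N" for i
  proof -
    have "{u \<in> A. gdist V E v u = i} = {}" using that by (auto simp: N_def)
    thus ?thesis by (simp only: sph) simp
  qed
  have "effect V E v = (\<Sum>i\<in>N. (1/2::real) ^ i * real (card (dist_sphere V E i v)))"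
    unfolding effect_def by (rule suminf_finite[OF finN z]) simp
  also have "\<dots> = (\<Sum>i\<in>N. \<Sum>u\<in>{u \<in> A. gdist V E v u = i}. (1/2::real) ^ gdist V E v u)"
    by (rule sum.cong) (auto simp: sph)
  also have "\<dots> = (\<Sum>u\<in>A. (1/2::real) ^ gdist V E v u)"
    unfolding N_def by (rule sum.image_gen[OF finA, symmetric])
  also have "\<dots> = (\<Sum>u\<in>V. wt V E v u)"
    unfolding A_def wt_def using fin by (simp add: sum.If_cases Int_def)
  finally show ?thesis .
qed

theorem theorem2p1:
  fixes V :: "'a set" and E :: "'a \<Rightarrow> 'a \<Rightarrow> bool" and P :: "'a \<Rightarrow> nat"
  assumes "simple_graph V E"
    and "solvable V E P"
  shows "(\<Sum>v\<in>V. effect V E v * real (P v)) \<ge> real (card V) + real (total_excess V E P)"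
proof -
  have fin: "finite V" using assms(1) unfolding simple_graph_def by blast
  have "real (card V) + real (total_excess V E P) = (\<Sum>u\<in>V. real (reach V E P u))"
  proof -
    have "real (card V) + real (total_excess V E P) = (\<Sum>u\<in>V. 1 + real (excess V E P u))"
      by (simp add: total_excess_def sum.distrib)
    also have "\<dots> = (\<Sum>u\<in>V. real (reach V E P u))"
    proof (rule sum.cong)
      fix u assume u: "u \<in> V"
      have r: "reachable V E P u" using assms(2) u by (simp add: solvable_def)
      show "1 + real (excess V E P u) = real (reach V E P u)"
        using reach_le[OF assms(1) u r] r by (simp add: excess_def of_nat_diff)
    qed simp
    finally show ?thesis .
  qed
  also have "\<dots> \<le> (\<Sum>u\<in>V. W V E P u)"
    by (rule sum_mono) (use reach_le[OF assms(1)] assms(2) in \<open>auto simp: solvable_def\<close>)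
  also have "\<dots> = (\<Sum>v\<in>V. \<Sum>u\<in>V. wt V E v u * real (P v))"
    unfolding W_def by (rule sum.swap)
  also have "\<dots> = (\<Sum>v\<in>V. effect V E v * real (P v))"
    by (simp add: effect_eq[OF assms(1)] sum_distrib_right)
  finally show ?thesis .
qed

end
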